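(* Let $A=J(\lambda,n)\in\mathrm{SL}(n,\mathbb{C})$ be a single Jordan block with $|\lambda|=1$. For $b\in\mathbb{C}$ with $|b|=1$, let $B=[b_{i,j}]_{1\le i,j\le n}$ be defined by $b_{i,j}=0$ if $j<i$; $b_{i,j}=(-1)^{j+1}\binom{j-2}{i-2}\dfrac{b}{\lambda^{i+j-2}}$ if $j\ge i$ and $i>1$; $b_{1,1}=b$; and $b_{1,j}=0$ for $2\le j\le n$. Then for a suitable choice of $b$ with $|b|=1$, the matrix $B$ lies in $\mathrm{SL}(n,\mathbb{C})$, satisfies $B\overline{B}=I$, and $BAB^{-1}=\overline{A}^{-1}$; that is, $B$ is a strong $c$-reverser of $A$.
   Context: $J(\lambda,n)$ is the $n\times n$ Jordan block with $\lambda$ on the diagonal and $1$ on the superdiagonal. $\overline{g}$ denotes entrywise complex conjugation. *)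

theory Defs
  imports "Jordan_Normal_Form.Jordan_Normal_Form" "Jordan_Normal_Form.Determinant"
begin

(* Matrix indices are 0-based here: entry (i,j) corresponds to the paper's (i+1,j+1). *)

definition conj_mat :: "complex mat \<Rightarrow> complex mat" where
  "conj_mat M = map_mat cnj M"

definition minv :: "complex mat \<Rightarrow> complex mat" where
  "minv M = (SOME N. inverts_mat M N \<and> inverts_mat N M)"

definition reverserB :: "nat \<Rightarrow> complex \<Rightarrow> complex \<Rightarrow> complex mat" where
  "reverserB n lam b = mat n n (\<lambda>(i,j).
     if j < i then 0
     else if i = 0 then (if j = 0 then b else 0)
     else (-1) ^ (j + 2) * of_nat ((j - 1) choose (i - 1)) * b / lam ^ (i + j))"

end

theory Submission
  imports Defs
begin

definition bf :: "complex \<Rightarrow> complex \<Rightarrow> nat \<Rightarrow> nat \<Rightarrow> complex" where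
  "bf lam b i j = (if j < i then 0
     else if i = 0 then (if j = 0 then b else 0)
     else (-1) ^ (j + 2) * of_nat ((j - 1) choose (i - 1)) * b / lam ^ (i + j))"

lemma bf_pos: "0 < i \<Longrightarrow> i \<le> j \<Longrightarrow>
   bf lam b i j = (-1) ^ j * of_nat ((j - 1) choose (i - 1)) * b / lam ^ (i + j)"
  unfolding bf_def by simp

lemma RB_carrier: "reverserB n lam b \<in> carrier_mat n n"
  unfolding reverserB_def by simp

lemma RB_dims[simp]: "dim_row (reverserB n lam b) = n" "dim_col (reverserB n lam b) = n"
  unfolding reverserB_def by simp_all

lemma RB_index: "i < n \<Longrightarrow> j < n \<Longrightarrow> reverserB n lam b $$ (i,j) = bf lam b i j"
  unfolding reverserB_def bf_def by simp

lemma conj_mat_carrier: "M \<in> carrier_mat n m \<Longrightarrow> conj_mat M \<in> carrier_mat n m"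
  unfolding conj_mat_def by simp

lemma conj_mat_dims[simp]: "dim_row (conj_mat M) = dim_row M" "dim_col (conj_mat M) = dim_col M"
  unfolding conj_mat_def by simp_all

lemma conj_mat_index[simp]: "i < dim_row M \<Longrightarrow> j < dim_col M \<Longrightarrow> conj_mat M $$ (i,j) = cnj (M $$ (i,j))"
  unfolding conj_mat_def by simp

lemma conj_conj[simp]: "conj_mat (conj_mat M) = M"
  by (rule eq_matI) auto

lemma conj_one[simp]: "conj_mat (1\<^sub>m n) = 1\<^sub>m n"
  by (rule eq_matI) auto

lemma conj_mult: "A \<in> carrier_mat n m \<Longrightarrow> B \<in> carrier_mat m p \<Longrightarrow>
   conj_mat (A * B) = conj_mat A * conj_mat B"
  by (rule eq_matI) (auto simp: scalar_prod_def cnj_sum)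

lemma minv_eq:
  assumes "inverts_mat M N" "inverts_mat N M" "M \<in> carrier_mat n n" "N \<in> carrier_mat n n"
  shows "minv M = N"
proof -
  have "\<exists>N. inverts_mat M N \<and> inverts_mat N M" using assms by blast
  then have h: "inverts_mat M (minv M) \<and> inverts_mat (minv M) M"
    unfolding minv_def by (rule someI_ex)
  define N' where "N' = minv M"
  have a: "M * N' = 1\<^sub>m n" and b: "N' * M = 1\<^sub>m (dim_row N')"
    using h assms unfolding N'_def inverts_mat_def by auto
  have "dim_col N' = n" using a by (metis index_mult_mat(3) index_one_mat(3))
  moreover have "dim_row N' = n" using b assms(3)
    by (metis carrier_matD(2) index_mult_mat(3) index_one_mat(3))
  ultimately have N'c: "N' \<in> carrier_mat n n" by auto
  have MN: "M * N = 1\<^sub>m n" using assms unfolding inverts_mat_def by auto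
  have "N' = N' * (M * N)" using MN N'c by simp
  also have "\<dots> = (N' * M) * N" using N'c assms by (simp add: assoc_mult_mat)
  also have "\<dots> = N" using b N'c assms by simp
  finally show ?thesis unfolding N'_def .
qed

lemma binsum:
  assumes "r \<le> N"
  shows "(\<Sum>m=r..N. (-1)^m * of_nat (m choose r) * of_nat (N choose m) :: complex)
        = (if N = r then (-1)^r else 0)"
proof -
  have "(\<Sum>m=r..N. (-1)^m * of_nat (m choose r) * of_nat (N choose m) :: complex)
      = (\<Sum>m=r..N. (-1)^m * of_nat (N choose r) * of_nat ((N - r) choose (m - r)))"
  proof (rule sum.cong[OF refl])
    fix m assume "m \<in> {r..N}"
    then have "(N choose m) * (m choose r) = (N choose r) * ((N - r) choose (m - r))"
      by (intro choose_mult) auto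
    then have "(of_nat (N choose m) * of_nat (m choose r) :: complex) = of_nat (N choose r) * of_nat ((N - r) choose (m - r))"
      by (metis of_nat_mult)
    then show "(-1)^m * of_nat (m choose r) * of_nat (N choose m) = ((-1)^m * of_nat (N choose r) * of_nat ((N - r) choose (m - r)) :: complex)"
      by (simp add: algebra_simps)
  qed
  also have "\<dots> = (\<Sum>t=0..N-r. (-1)^(t+r) * of_nat (N choose r) * of_nat ((N - r) choose t))"
    using sum.shift_bounds_cl_nat_ivl[of "\<lambda>m. (-1)^m * of_nat (N choose r) * of_nat ((N - r) choose (m - r)) :: complex" 0 r "N-r"] assms
    by simp
  also have "\<dots> = (-1)^r * of_nat (N choose r) * (\<Sum>t\<le>N-r. (-1)^t * of_nat ((N - r) choose t))"
    by (simp add: sum_distrib_left power_add atLeast0AtMost algebra_simps)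
  also have "\<dots> = (if N = r then (-1)^r else 0)"
  proof (cases "N = r")
    case True then show ?thesis by simp
  next
    case False then have "N - r > 0" using assms by simp
    from choose_alternating_sum[OF this, where ?'a=complex] False show ?thesis by simp
  qed
  finally show ?thesis .
qed

lemma unit_cnj: "cmod z = 1 \<Longrightarrow> z * cnj z = 1"
  using complex_norm_square[of z] by simp

lemma unit_cnj': "cmod z = 1 \<Longrightarrow> cnj z = inverse z"
  using unit_cnj[of z] by (metis inverse_unique)

lemma BcB_term:
  assumes l: "cmod lam = 1" and bb: "cmod b = 1" and ij: "0 < i" "i \<le> j" "j \<le> k"
  shows "bf lam b i j * cnj (bf lam b j k)
       = (- ((-1)^k) * lam^k / lam^i) * ((-1)^(j-1) * of_nat ((j-1) choose (i-1)) * of_nat ((k-1) choose (j-1)))"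
proof -
  have l0: "lam \<noteq> 0" using l by auto
  have cl: "cnj lam = inverse lam" using unit_cnj'[OF l] .
  have cb: "b * cnj b = 1" using unit_cnj[OF bb] .
  obtain j' where j': "j = Suc j'" using ij by (cases j) auto
  have "bf lam b i j * cnj (bf lam b j k) =
     ((-1) ^ j * of_nat ((j - 1) choose (i - 1)) * b / lam ^ (i + j)) *
     ((-1) ^ k * of_nat ((k - 1) choose (j - 1)) * cnj b * lam ^ (j + k))"
    using ij by (simp add: bf_pos cl power_inverse divide_inverse)
  also have "\<dots> = (- ((-1)^k) * lam^k / lam^i) * ((-1)^(j-1) * of_nat ((j-1) choose (i-1)) * of_nat ((k-1) choose (j-1))) * (b * cnj b)"
    using l0 j' by (simp add: field_simps power_add)
  finally show ?thesis using cb by simp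
qed

lemma BcB_entry:
  assumes l: "cmod lam = 1" and bb: "cmod b = 1" and ik: "i < n" "k < n"
  shows "(\<Sum>j\<in>{0..<n}. bf lam b i j * cnj (bf lam b j k)) = (if i = k then 1 else 0)"
proof (cases "i = 0")
  case True
  have "(\<Sum>j\<in>{0..<n}. bf lam b i j * cnj (bf lam b j k)) =
        (\<Sum>j\<in>{0..<n}. if j = 0 then b * cnj (bf lam b 0 k) else 0)"
    using True by (intro sum.cong) (auto simp: bf_def)
  also have "\<dots> = b * cnj (bf lam b 0 k)" using ik by simp
  also have "\<dots> = (if i = k then 1 else 0)" using True unit_cnj[OF bb] by (auto simp: bf_def)
  finally show ?thesis .
next
  case False
  define c where "c = - ((-1)^k) * lam^k / lam^i"
  define g :: "nat \<Rightarrow> complex" where "g m = (-1)^m * of_nat (m choose (i-1)) * of_nat ((k-1) choose m)" for m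
  have "(\<Sum>j\<in>{0..<n}. bf lam b i j * cnj (bf lam b j k)) =
        (\<Sum>j\<in>{0..<n}. if j \<in> {i..k} then c * g (j - 1) else 0)"
  proof (intro sum.cong refl)
    fix j assume "j \<in> {0..<n}"
    show "bf lam b i j * cnj (bf lam b j k) = (if j \<in> {i..k} then c * g (j - 1) else 0)"
    proof (cases "j \<in> {i..k}")
      case True then show ?thesis using BcB_term[OF l bb, of i j k] False
        unfolding c_def g_def by (auto simp: mult.assoc)
    next
      case F: False
      then have "j < i \<or> k < j" by auto
      then show ?thesis using F by (auto simp: bf_def)
    qed
  qed
  also have "\<dots> = (\<Sum>j\<in>{i..k}. c * g (j - 1))"
    using ik by (intro sum.mono_neutral_cong_right) auto
  also have "\<dots> = (if i = k then 1 else 0)"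
  proof (cases "i \<le> k")
    case True
    obtain i' k' where ik': "i = Suc i'" "k = Suc k'" using False True by (cases i; cases k) auto
    have e: "{i..k} = {i'+1..k'+1}" using ik' by simp
    have "(\<Sum>j\<in>{i..k}. c * g (j - 1)) = c * (\<Sum>j\<in>{i'+1..k'+1}. g (j - 1))"
      by (simp only: e sum_distrib_left)
    also have "\<dots> = c * (\<Sum>m=i'..k'. g m)"
      unfolding sum.shift_bounds_cl_nat_ivl by simp
    finally have "(\<Sum>j\<in>{i..k}. c * g (j - 1)) = c * (\<Sum>m=i'..k'. g m)" .
    also have "\<dots> = c * (if k' = i' then (-1)^i' else 0)"
      unfolding g_def using binsum[of i' k'] True ik' by simp
    also have "\<dots> = (if i = k then 1 else 0)"
      unfolding c_def using ik' l by (auto simp: power_add)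
    finally show ?thesis .
  next
    case False then show ?thesis by simp
  qed
  finally show ?thesis .
qed

lemma bf_rec:
  assumes l0: "lam \<noteq> 0"
  shows "lam * bf lam b (Suc i) (Suc j) + inverse lam * bf lam b i j + bf lam b (Suc i) j = 0"
proof (cases "j < i")
  case True then show ?thesis by (simp add: bf_def)
next
  case False
  show ?thesis
  proof (cases i)
    case 0
    then show ?thesis using l0 by (cases j) (auto simp: bf_def field_simps)
  next
    case (Suc i')
    then obtain j' where j': "j = Suc j'" using False by (cases j) auto
    have pas: "(j choose i) = (j' choose i') + (j' choose i)"
      using Suc j' by simp
    define D where "D = lam ^ (i + j + 1)"
    have D0: "D \<noteq> 0" unfolding D_def using l0 by simp
    have t1: "lam * bf lam b (Suc i) (Suc j) = (-1)^(Suc j) * of_nat (j choose i) * b / D"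
      unfolding D_def using False Suc l0 by (simp add: bf_pos power_add field_simps)
    have t2: "inverse lam * bf lam b i j = (-1)^j * of_nat (j' choose i') * b / D"
      unfolding D_def using False Suc j' l0 by (simp add: bf_pos field_simps)
    have t3: "bf lam b (Suc i) j = (-1)^j * of_nat (j' choose i) * b / D"
      unfolding D_def using False Suc j' l0 by (cases "j = i") (simp_all add: bf_def)
    have "(lam * bf lam b (Suc i) (Suc j) + inverse lam * bf lam b i j + bf lam b (Suc i) j) * D
       = (-1)^(Suc j) * of_nat (j choose i) * b + (-1)^j * of_nat (j' choose i') * b + (-1)^j * of_nat (j' choose i) * b"
      unfolding t1 t2 t3 using D0 by (simp add: field_simps)
    also have "\<dots> = 0" unfolding pas by (simp add: algebra_simps)
    finally show ?thesis using D0 by simp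
  qed
qed

lemma sum_jb_left:
  assumes "i < n"
  shows "(\<Sum>k\<in>{0..<n}. (if i = k then a else if Suc i = k then 1 else 0) * f k)
       = a * f i + (if Suc i < n then f (Suc i) else (0::complex))"
proof -
  have "(\<Sum>k\<in>{0..<n}. (if i = k then a else if Suc i = k then 1 else 0) * f k)
     = (\<Sum>k\<in>{0..<n}. (if k = i then a * f i else 0) + (if k = Suc i then f (Suc i) else 0))"
    by (intro sum.cong) auto
  also have "\<dots> = a * f i + (if Suc i < n then f (Suc i) else 0)"
    using assms by (simp add: sum.distrib)
  finally show ?thesis .
qed

lemma sum_jb_right:
  assumes "j < n"
  shows "(\<Sum>k\<in>{0..<n}. f k * (if k = j then a else if Suc k = j then 1 else 0))
       = f j * a + (if 0 < j then f (j - 1) else (0::complex))"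
proof -
  have "(\<Sum>k\<in>{0..<n}. f k * (if k = j then a else if Suc k = j then 1 else 0))
     = (\<Sum>k\<in>{0..<n}. (if k = j then f j * a else 0) + (if 0 < j \<and> k = j - 1 then f (j - 1) else 0))"
    by (intro sum.cong) auto
  also have "\<dots> = f j * a + (if 0 < j then f (j - 1) else 0)"
    using assms by (simp add: sum.distrib)
  finally show ?thesis .
qed

lemma key_identity:
  assumes l: "cmod lam = 1"
  shows "conj_mat (jordan_block n lam) * reverserB n lam b * jordan_block n lam = reverserB n lam b"
proof -
  have l0: "lam \<noteq> 0" using l by auto
  have cl: "cnj lam = inverse lam" using unit_cnj'[OF l] .
  define X where "X = conj_mat (jordan_block n lam) * reverserB n lam b"
  have Xc: "X \<in> carrier_mat n n" unfolding X_def by (rule mult_carrier_mat[OF conj_mat_carrier[OF jordan_block_carrier] RB_carrier])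
  have Xi: "X $$ (i, l) = inverse lam * bf lam b i l + bf lam b (Suc i) l" if "i < n" "l < n" for i l
  proof -
    have "X $$ (i, l) = (\<Sum>k\<in>{0..<n}. (if i = k then inverse lam else if Suc i = k then 1 else 0) * bf lam b k l)"
      unfolding X_def using that RB_carrier[of n lam b]
      by (auto simp: scalar_prod_def RB_index cl intro!: sum.cong)
    also have "\<dots> = inverse lam * bf lam b i l + (if Suc i < n then bf lam b (Suc i) l else 0)"
      by (rule sum_jb_left[OF that(1)])
    also have "\<dots> = inverse lam * bf lam b i l + bf lam b (Suc i) l"
      using that by (auto simp: bf_def)
    finally show ?thesis .
  qed
  show ?thesis
  proof (rule eq_matI)
    fix i j assume ij: "i < dim_row (reverserB n lam b)" "j < dim_col (reverserB n lam b)"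
    then have ij': "i < n" "j < n" using RB_carrier[of n lam b] by auto
    have "(X * jordan_block n lam) $$ (i, j) = (\<Sum>k\<in>{0..<n}. X $$ (i,k) * (if k = j then lam else if Suc k = j then 1 else 0))"
      using ij' Xc by (auto simp: scalar_prod_def intro!: sum.cong)
    also have "\<dots> = X $$ (i,j) * lam + (if 0 < j then X $$ (i, j - 1) else 0)"
      by (rule sum_jb_right[OF ij'(2)])
    also have "\<dots> = bf lam b i j"
    proof (cases j)
      case 0 then show ?thesis using ij' Xi l0 by (simp add: bf_def field_simps)
    next
      case (Suc j')
      have "lam * bf lam b (Suc i) (Suc j') + inverse lam * bf lam b i j' + bf lam b (Suc i) j' = 0"
        by (rule bf_rec[OF l0])
      moreover have "X $$ (i,j) * lam = bf lam b i j + lam * bf lam b (Suc i) j"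
        using ij' Xi[of i j] l0 by (simp add: field_simps)
      moreover have "X $$ (i,j') = inverse lam * bf lam b i j' + bf lam b (Suc i) j'"
        using ij' Xi[of i j'] Suc by simp
      ultimately show ?thesis using Suc
        by (simp add: algebra_simps)
    qed
    finally show "(conj_mat (jordan_block n lam) * reverserB n lam b * jordan_block n lam) $$ (i, j) = reverserB n lam b $$ (i, j)"
      using ij' unfolding X_def by (simp add: RB_index)
  qed (auto simp: RB_carrier conj_mat_def)
qed

lemma BcB:
  assumes l: "cmod lam = 1" and bb: "cmod b = 1"
  shows "reverserB n lam b * conj_mat (reverserB n lam b) = 1\<^sub>m n"
proof (rule eq_matI)
  fix i k assume "i < dim_row (1\<^sub>m n :: complex mat)" "k < dim_col (1\<^sub>m n :: complex mat)"
  then have ik: "i < n" "k < n" by auto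
  have "(reverserB n lam b * conj_mat (reverserB n lam b)) $$ (i, k)
      = (\<Sum>j\<in>{0..<n}. bf lam b i j * cnj (bf lam b j k))"
    using ik by (auto simp: scalar_prod_def RB_index intro!: sum.cong)
  also have "\<dots> = 1\<^sub>m n $$ (i, k)" using BcB_entry[OF l bb ik] ik by simp
  finally show "(reverserB n lam b * conj_mat (reverserB n lam b)) $$ (i, k) = 1\<^sub>m n $$ (i, k)" .
qed auto

lemma det_RB: "det (reverserB n lam b) = b ^ n * (\<Prod>i\<in>{0..<n}. bf lam 1 i i)"
proof -
  have "upper_triangular (reverserB n lam b)"
    unfolding upper_triangular_def by (auto simp: RB_index bf_def)
  then have "det (reverserB n lam b) = (\<Prod>i\<in>{0..<n}. bf lam b i i)"
    by (simp add: det_upper_triangular[OF _ RB_carrier] prod_list_diag_prod RB_index)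
  also have "\<dots> = (\<Prod>i\<in>{0..<n}. b * bf lam 1 i i)"
    by (intro prod.cong) (auto simp: bf_def)
  also have "\<dots> = b ^ n * (\<Prod>i\<in>{0..<n}. bf lam 1 i i)"
    by (simp add: prod.distrib)
  finally show ?thesis .
qed

lemma norm_bf1: "cmod lam = 1 \<Longrightarrow> cmod (bf lam 1 i i) = 1"
  by (auto simp: bf_def norm_divide norm_power norm_mult)

theorem lemma3p7:
  fixes n :: nat and lam :: complex
  assumes "cmod lam = 1"
    and "det (jordan_block n lam) = 1"
  shows "\<exists>b :: complex. cmod b = 1 \<and>
           det (reverserB n lam b) = 1 \<and>
           reverserB n lam b * conj_mat (reverserB n lam b) = 1\<^sub>m n \<and>
           reverserB n lam b * jordan_block n lam * minv (reverserB n lam b)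
             = minv (conj_mat (jordan_block n lam))"
proof -
  note l = assms(1)
  define Q where "Q = (\<Prod>i\<in>{0..<n}. bf lam 1 i i)"
  have nQ: "cmod Q = 1" unfolding Q_def prod_norm[symmetric] using norm_bf1[OF l] by simp
  define b where "b = cis (Arg (inverse Q) / real n)"
  have bb: "cmod b = 1" unfolding b_def by simp
  have nQ': "cmod (inverse Q) = 1" using nQ by (simp add: norm_inverse)
  have "b ^ n = inverse Q"
  proof (cases "n = 0")
    case True then show ?thesis unfolding Q_def by simp
  next
    case False
    then have "b ^ n = cis (Arg (inverse Q))" unfolding b_def DeMoivre by simp
    also have "\<dots> = inverse Q" using rcis_cmod_Arg[of "inverse Q"] nQ' by (simp add: rcis_def)
    finally show ?thesis .
  qed
  then have det1: "det (reverserB n lam b) = 1"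
    unfolding det_RB Q_def[symmetric] using nQ by (auto simp: field_simps)
  define B where "B = reverserB n lam b"
  define J where "J = jordan_block n lam"
  have Bc: "B \<in> carrier_mat n n" unfolding B_def by (rule RB_carrier)
  have cBc: "conj_mat B \<in> carrier_mat n n" using Bc by (rule conj_mat_carrier)
  have Jc: "J \<in> carrier_mat n n" unfolding J_def by simp
  have cJc: "conj_mat J \<in> carrier_mat n n" using Jc by (rule conj_mat_carrier)
  have BcB1: "B * conj_mat B = 1\<^sub>m n" unfolding B_def by (rule BcB[OF l bb])
  have cBB1: "conj_mat B * B = 1\<^sub>m n"
    using arg_cong[OF BcB1, of conj_mat] conj_mult[OF Bc cBc] by simp
  have K: "conj_mat J * B * J = B" unfolding B_def J_def by (rule key_identity[OF l])
  have K': "J * conj_mat B * conj_mat J = conj_mat B"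
    using arg_cong[OF K, of conj_mat] conj_mult[OF mult_carrier_mat[OF cJc Bc] Jc] conj_mult[OF cJc Bc]
    by simp
  have mB: "minv B = conj_mat B"
    by (rule minv_eq[OF _ _ Bc cBc]) (use BcB1 cBB1 Bc in \<open>auto simp: inverts_mat_def\<close>)
  have mJ: "minv (conj_mat J) = B * J * conj_mat B"
  proof (rule minv_eq[OF _ _ cJc])
    show "B * J * conj_mat B \<in> carrier_mat n n" using Bc Jc cBc by simp
    have "conj_mat J * (B * J * conj_mat B) = (conj_mat J * B * J) * conj_mat B"
      by (subst assoc_mult_mat[OF cJc Bc Jc]) (rule assoc_mult_mat[OF cJc mult_carrier_mat[OF Bc Jc] cBc, symmetric])
    then show "inverts_mat (conj_mat J) (B * J * conj_mat B)"
      unfolding inverts_mat_def using K BcB1 cJc Jc by simp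
    have "B * J * conj_mat B * conj_mat J = B * (J * conj_mat B * conj_mat J)"
      by (subst assoc_mult_mat[OF Bc Jc cBc]) (rule assoc_mult_mat[OF Bc mult_carrier_mat[OF Jc cBc] cJc])
    then show "inverts_mat (B * J * conj_mat B) (conj_mat J)"
      unfolding inverts_mat_def using K' BcB1 Bc by simp
  qed
  show ?thesis
    apply (rule exI[of _ b])
    using bb det1 BcB1 mB mJ unfolding B_def J_def by simp
qed

end
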